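(* Let $(A,B)$ be controllable, $Q_t\in\mathcal Q$, $R_t\in\mathcal R$ ($0\le t\le N-1$), $Q_N\in\mathcal P$, let $P_t$ be defined by $P_N=Q_N$, $P_t=Q_t+A^\top\big(P_{t+1}-P_{t+1}B(R_t+B^\top P_{t+1}B)^{-1}B^\top P_{t+1}\big)A$, and let $K_t=(R_t+B^\top P_{t+1}B)^{-1}B^\top P_{t+1}A$ and $D_t=A-BK_t$ for $0\le t\le N-1$. Define $\Phi(t,t_0)=D_{t-1}\cdots D_{t_0}$ for $t>t_0$ and $\Phi(t,t)=I$. Then for all $0\le t_0\le t\le N$, $$\|\Phi(t,t_0)\|\le c_7c_2^{\,t-t_0},\qquad c_7=\sqrt{\upsilon_{\max}(\bar P)/\upsilon_{\min}(\underline P)},\quad c_2=\sqrt{1-\mu_f/\upsilon_{\max}(\bar P)}\in[0,1).$$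
   Context: Fix $\mu_f,\mu_g>0$, $0<l_f,l_g<\infty$. $P^e(Q,R)$ denotes the positive definite solution of the DARE $P=Q+A^\top(P-PB(B^\top PB+R)^{-1}B^\top P)A$. $\mathcal Q=\{Q:\mu_fI_n\le Q\le l_fI_n\}$, $\mathcal R=\{R:\mu_gI_m\le R\le l_gI_m\}$, $\bar P=P^e(l_fI_n,l_gI_m)$, $\underline P=P^e(\mu_fI_n,\mu_gI_m)$, $\mathcal P=\{P:\underline P\le P\le\bar P\}$ (Loewner order). $\upsilon_{\max},\upsilon_{\min}$ denote largest and smallest eigenvalues. *)

theory Defs
  imports "HOL-Analysis.Analysis"
begin

type_synonym ('n) sqmat = "real^'n^'n"

text \<open>Positive semidefinite / positive definite (symmetric) matrices and the Loewner order.\<close>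
definition psd :: "real^'n^'n \<Rightarrow> bool" where
  "psd M \<longleftrightarrow> transpose M = M \<and> (\<forall>x. 0 \<le> x \<bullet> (M *v x))"

definition pos_def :: "real^'n^'n \<Rightarrow> bool" where
  "pos_def M \<longleftrightarrow> transpose M = M \<and> (\<forall>x. x \<noteq> 0 \<longrightarrow> 0 < x \<bullet> (M *v x))"

definition loewner_le :: "real^'n^'n \<Rightarrow> real^'n^'n \<Rightarrow> bool" where
  "loewner_le X Y \<longleftrightarrow> psd (Y - X)"

text \<open>Eigenvalues; largest and smallest eigenvalue.\<close>
definition eigenvalues :: "real^'n^'n \<Rightarrow> real set" where
  "eigenvalues M = {l. \<exists>v. v \<noteq> 0 \<and> M *v v = l *\<^sub>R v}"

definition eig_max :: "real^'n^'n \<Rightarrow> real" where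
  "eig_max M = Max (eigenvalues M)"

definition eig_min :: "real^'n^'n \<Rightarrow> real" where
  "eig_min M = Min (eigenvalues M)"

text \<open>Controllability: rank [B, AB, ..., A^(n-1)B] = n, i.e. the columns span R^n.\<close>
definition controllable :: "real^'n^'n \<Rightarrow> real^'m^'n \<Rightarrow> bool" where
  "controllable A B \<longleftrightarrow>
     span (\<Union>k<CARD('n). range (\<lambda>u. (((*v) A) ^^ k) (B *v u))) = UNIV"

text \<open>Riccati map  Q + A^T (P - P B (B^T P B + R)^{-1} B^T P) A.\<close>
definition ric :: "real^'n^'n \<Rightarrow> real^'m^'n \<Rightarrow> real^'n^'n \<Rightarrow> real^'m^'m \<Rightarrow> real^'n^'n \<Rightarrow> real^'n^'n" where
  "ric A B Q R P = Q + transpose A ** (P - P ** B ** matrix_inv (transpose B ** P ** B + R) ** transpose B ** P) ** A"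

text \<open>P^e(Q,R): the positive definite solution of the DARE.\<close>
definition dare_sol :: "real^'n^'n \<Rightarrow> real^'m^'n \<Rightarrow> real^'n^'n \<Rightarrow> real^'m^'m \<Rightarrow> real^'n^'n" where
  "dare_sol A B Q R = (THE P. pos_def P \<and> P = ric A B Q R P)"

definition Qset :: "real \<Rightarrow> real \<Rightarrow> (real^'n^'n) set" where
  "Qset mu l = {Q. loewner_le (mu *\<^sub>R mat 1) Q \<and> loewner_le Q (l *\<^sub>R mat 1)}"

definition Pset :: "real^'n^'n \<Rightarrow> real^'m^'n \<Rightarrow> real \<Rightarrow> real \<Rightarrow> real \<Rightarrow> real \<Rightarrow> (real^'n^'n) set" where
  "Pset A B mu_f l_f mu_g l_g =
     {P. loewner_le (dare_sol A B (mu_f *\<^sub>R mat 1) (mu_g *\<^sub>R mat 1)) P \<and>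
         loewner_le P (dare_sol A B (l_f *\<^sub>R mat 1) (l_g *\<^sub>R mat 1))}"

text \<open>Backward Riccati recursion: riccati_aux k = P_{N-k}; P_N = Q_N,
  P_t = ric A B Q_t R_t P_{t+1}.\<close>
primrec riccati_aux :: "real^'n^'n \<Rightarrow> real^'m^'n \<Rightarrow> (nat \<Rightarrow> real^'n^'n) \<Rightarrow> (nat \<Rightarrow> real^'m^'m) \<Rightarrow> nat \<Rightarrow> nat \<Rightarrow> real^'n^'n" where
  "riccati_aux A B Q R N 0 = Q N"
| "riccati_aux A B Q R N (Suc k) = ric A B (Q (N - Suc k)) (R (N - Suc k)) (riccati_aux A B Q R N k)"

definition riccati :: "real^'n^'n \<Rightarrow> real^'m^'n \<Rightarrow> (nat \<Rightarrow> real^'n^'n) \<Rightarrow> (nat \<Rightarrow> real^'m^'m) \<Rightarrow> nat \<Rightarrow> nat \<Rightarrow> real^'n^'n" where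
  "riccati A B Q R N t = riccati_aux A B Q R N (N - t)"

text \<open>Gain K_t and closed-loop matrix D_t = A - B K_t.\<close>
definition gain :: "real^'n^'n \<Rightarrow> real^'m^'n \<Rightarrow> (nat \<Rightarrow> real^'n^'n) \<Rightarrow> (nat \<Rightarrow> real^'m^'m) \<Rightarrow> nat \<Rightarrow> nat \<Rightarrow> real^'n^'m" where
  "gain A B Q R N t = (let P = riccati A B Q R N (Suc t) in
      matrix_inv (R t + transpose B ** P ** B) ** transpose B ** P ** A)"

definition closed_loop :: "real^'n^'n \<Rightarrow> real^'m^'n \<Rightarrow> (nat \<Rightarrow> real^'n^'n) \<Rightarrow> (nat \<Rightarrow> real^'m^'m) \<Rightarrow> nat \<Rightarrow> nat \<Rightarrow> real^'n^'n" where
  "closed_loop A B Q R N t = A - B ** gain A B Q R N t"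

text \<open>State transition: trans_prod D t0 k = D_(t0+k-1) ... D_(t0); Phi(t,t0) = trans_prod D t0 (t - t0).\<close>
primrec trans_prod :: "(nat \<Rightarrow> real^'n^'n) \<Rightarrow> nat \<Rightarrow> nat \<Rightarrow> real^'n^'n" where
  "trans_prod D t0 0 = mat 1"
| "trans_prod D t0 (Suc k) = D (t0 + k) ** trans_prod D t0 k"

definition Phi :: "(nat \<Rightarrow> real^'n^'n) \<Rightarrow> nat \<Rightarrow> nat \<Rightarrow> real^'n^'n" where
  "Phi D t t0 = trans_prod D t0 (t - t0)"

text \<open>Induced (spectral) matrix norm.\<close>
definition mnorm :: "real^'n^'m \<Rightarrow> real" where
  "mnorm M = onorm (\<lambda>x. M *v x)"

end

theory Submission
  imports Defs
begin


definition qf :: "real^'n^'n \<Rightarrow> real^'n \<Rightarrow> real" where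
  "qf M x = x \<bullet> (M *v x)"

lemma dot_mv: "(x::real^'n) \<bullet> ((M::real^'m^'n) *v y) = (transpose M *v x) \<bullet> y"
  by (metis dot_lmul_matrix transpose_matrix_vector transpose_transpose)

lemma sym_dot: "transpose M = M \<Longrightarrow> (x::real^'n) \<bullet> ((M::real^'n^'n) *v y) = (M *v x) \<bullet> y"
  by (metis dot_mv)

lemma transpose_add': "transpose (X + Y) = transpose X + transpose (Y::real^'n^'m)"
  by (simp add: transpose_def vec_eq_iff)
lemma transpose_diff': "transpose (X - Y) = transpose X - transpose (Y::real^'n^'m)"
  by (simp add: transpose_def vec_eq_iff)
lemma transpose_neg': "transpose (- Y) = - transpose (Y::real^'n^'m)"
  by (simp add: transpose_def vec_eq_iff)

lemma inv_props:
  assumes "invertible (S::real^'n^'n)"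
  shows "S ** matrix_inv S = mat 1" "matrix_inv S ** S = mat 1"
  using someI_ex[OF assms[unfolded invertible_def]] unfolding matrix_inv_def by auto

lemma inv_sym:
  assumes "invertible (S::real^'n^'n)" "transpose S = S"
  shows "transpose (matrix_inv S) = matrix_inv S"
proof -
  have "transpose (matrix_inv S) ** S = mat 1"
    by (metis assms(2) inv_props(1)[OF assms(1)] matrix_transpose_mul transpose_mat)
  then have "transpose (matrix_inv S) = transpose (matrix_inv S) ** (S ** matrix_inv S)"
    by (simp add: inv_props[OF assms(1)])
  also have "\<dots> = matrix_inv S" using \<open>transpose (matrix_inv S) ** S = mat 1\<close>
    by (simp add: matrix_mul_assoc)
  finally show ?thesis .
qed

lemma pd_invertible:
  assumes "\<And>x. x \<noteq> 0 \<Longrightarrow> 0 < qf (S::real^'n^'n) x"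
  shows "invertible S"
proof -
  have "\<forall>x. S *v x = 0 \<longrightarrow> x = 0"
    using assms unfolding qf_def by (metis inner_zero_right less_irrefl)
  then show ?thesis using matrix_left_invertible_ker invertible_left_inverse by blast
qed

lemma mv_scaleR_left: "(c *\<^sub>R (M::real^'n^'m)) *v x = c *\<^sub>R (M *v x)"
  by (simp add: vec_eq_iff matrix_vector_mult_def sum_distrib_left mult.assoc)
lemma mv_scaleR_right: "(M::real^'n^'m) *v (c *\<^sub>R x) = c *\<^sub>R (M *v x)"
  by (simp add: vec_eq_iff matrix_vector_mult_def sum_distrib_left mult.left_commute)
lemma qf_add: "qf (X + Y) x = qf X x + qf Y x"
  by (simp add: qf_def matrix_vector_mult_add_rdistrib inner_add_right)
lemma qf_diff: "qf (X - Y) x = qf X x - qf Y x"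
  by (simp add: qf_def matrix_vector_mult_diff_rdistrib inner_diff_right)
lemma qf_scal_id: "qf (c *\<^sub>R mat 1) x = c * (x \<bullet> x)"
  by (simp add: qf_def mv_scaleR_left)
lemma qf_zero[simp]: "qf 0 x = 0"
  by (simp add: qf_def)
lemma qf_zero_vec[simp]: "qf M 0 = 0"
  by (simp add: qf_def)
lemma mv_uminus_right: "(M::real^'n^'m) *v (- x) = - (M *v x)"
  by (simp add: vec_eq_iff matrix_vector_mult_def sum_negf)
lemma qf_uminus_vec[simp]: "qf M (- x) = qf M x"
  by (simp add: qf_def mv_uminus_right)
lemma qf_scaleR_vec: "qf M (c *\<^sub>R x) = c^2 * qf M x"
  by (simp add: qf_def mv_scaleR_right power2_eq_square)


declare transpose_matrix_vector[simp del]

lemma mv_assoc: "(X ** Y) *v v = X *v (Y *v v)"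
  by (simp add: matrix_vector_mul_assoc)

lemma cs:
  fixes A :: "real^'n^'n" and B :: "real^'m^'n" and Q P :: "real^'n^'n" and R :: "real^'m^'m"
  assumes symP: "transpose P = P" and symR: "transpose R = R"
    and inv: "invertible (transpose B ** P ** B + R)"
  shows "qf Q x + qf R u + qf P (A *v x + B *v u) =
         qf (ric A B Q R P) x + qf (transpose B ** P ** B + R)
             (u + matrix_inv (transpose B ** P ** B + R) *v (transpose B *v (P *v (A *v x))))"
proof -
  define S where "S = transpose B ** P ** B + R"
  define Si where "Si = matrix_inv S"
  define g where "g = transpose B *v (P *v (A *v x))"
  define a where "a = A *v x"
  define b where "b = B *v u"
  have symS: "transpose S = S"
    unfolding S_def by (simp add: transpose_add' matrix_transpose_mul symP symR matrix_mul_assoc)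
  have SSi: "S *v (Si *v v) = v" for v
    using inv_props(1)[OF inv[folded S_def]] by (simp add: Si_def matrix_vector_mul_assoc)
  have PBd: "(P *v a) \<bullet> (B *v z) = g \<bullet> z" for z
    by (simp add: dot_mv g_def a_def)
  have ric1: "qf (ric A B Q R P) x = qf Q x + a \<bullet> (P *v a) - g \<bullet> (Si *v g)"
  proof -
    have "ric A B Q R P *v x = Q *v x + transpose A *v (P *v a - P *v (B *v (Si *v g)))"
      by (simp add: ric_def matrix_vector_mult_add_rdistrib matrix_vector_mult_diff_rdistrib
          mv_assoc a_def g_def Si_def S_def)
    then have "qf (ric A B Q R P) x = qf Q x + a \<bullet> (P *v a - P *v (B *v (Si *v g)))"
      by (simp add: qf_def inner_add_right dot_mv a_def)
    also have "a \<bullet> (P *v (B *v (Si *v g))) = g \<bullet> (Si *v g)"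
      using PBd sym_dot[OF symP] by metis
    ultimately show ?thesis by (simp add: inner_diff_right)
  qed
  have qS: "qf S (u + Si *v g) = u \<bullet> (S *v u) + 2 * (u \<bullet> g) + g \<bullet> (Si *v g)"
  proof -
    have "qf S (u + Si *v g) = u \<bullet> (S *v u) + u \<bullet> (S *v (Si *v g)) + (Si *v g) \<bullet> (S *v u)
        + (Si *v g) \<bullet> (S *v (Si *v g))"
      by (simp add: qf_def matrix_vector_right_distrib inner_add_left inner_add_right)
    also have "(Si *v g) \<bullet> (S *v u) = g \<bullet> u"
      using sym_dot[OF symS, of "Si *v g" u] SSi by simp
    finally show ?thesis using SSi by (simp add: inner_commute)
  qed
  have uSu: "u \<bullet> (S *v u) = b \<bullet> (P *v b) + qf R u"
    by (simp add: S_def qf_def matrix_vector_mult_add_rdistrib mv_assoc inner_add_right dot_mv b_def)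
  have lhs: "qf P (a + b) = a \<bullet> (P *v a) + 2 * (u \<bullet> g) + b \<bullet> (P *v b)"
  proof -
    have "qf P (a + b) = a \<bullet> (P *v a) + a \<bullet> (P *v b) + b \<bullet> (P *v a) + b \<bullet> (P *v b)"
      by (simp add: qf_def matrix_vector_right_distrib inner_add_left inner_add_right)
    moreover have "a \<bullet> (P *v b) = g \<bullet> u" using PBd sym_dot[OF symP] b_def by metis
    moreover have "b \<bullet> (P *v a) = g \<bullet> u" using PBd[of u] b_def by (simp add: inner_commute)
    ultimately show ?thesis by (simp add: inner_commute)
  qed
  have "transpose B *v (P *v (A *v x)) = g" by (simp add: g_def)
  then show ?thesis
    using ric1 qS uSu lhs unfolding S_def[symmetric] Si_def[symmetric]
      a_def[symmetric] b_def[symmetric] by simp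
qed



lemma psd_qf: "psd M \<longleftrightarrow> transpose M = M \<and> (\<forall>x. 0 \<le> qf M x)"
  by (simp add: psd_def qf_def)
lemma pd_qf: "pos_def M \<longleftrightarrow> transpose M = M \<and> (\<forall>x. x \<noteq> 0 \<longrightarrow> 0 < qf M x)"
  by (simp add: pos_def_def qf_def)

lemma qf_BPB: "qf (transpose B ** P ** B) v = qf P (B *v v)"
  by (simp add: qf_def mv_assoc dot_mv)

lemma S_pd:
  assumes "pos_def R" "psd P"
  shows "pos_def (transpose B ** P ** B + R)"
  using assms unfolding pd_qf psd_qf
  by (auto simp: transpose_add' matrix_transpose_mul matrix_mul_assoc qf_add qf_BPB
      intro: add_nonneg_pos)

lemma S_inv:
  assumes "pos_def R" "psd P"
  shows "invertible (transpose B ** P ** B + R)"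
  using S_pd[OF assms] pd_invertible unfolding pd_qf by blast

lemma ric_sym:
  assumes "transpose Q = Q" "transpose R = R" "transpose P = P"
    "invertible (transpose B ** P ** B + R)"
  shows "transpose (ric A B Q R P) = ric A B Q R P"
proof -
  have sS: "transpose (transpose B ** P ** B + R) = transpose B ** P ** B + R"
    using assms by (simp add: transpose_add' matrix_transpose_mul matrix_mul_assoc)
  have si: "transpose (matrix_inv (transpose B ** P ** B + R)) = matrix_inv (transpose B ** P ** B + R)"
    by (rule inv_sym[OF assms(4) sS])
  show ?thesis using assms si
    by (simp add: ric_def transpose_add' transpose_diff' matrix_transpose_mul matrix_mul_assoc)
qed

lemma ric_le:
  assumes "pos_def R" "psd P"
  shows "qf (ric A B Q R P) x \<le> qf Q x + qf R u + qf P (A *v x + B *v u)"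
proof -
  have "transpose P = P" "transpose R = R" using assms unfolding pd_qf psd_qf by auto
  moreover have "qf (transpose B ** P ** B + R) v \<ge> 0" for v
    using S_pd[OF assms] unfolding pd_qf by (cases "v = 0") (auto simp: qf_def intro: less_imp_le)
  ultimately show ?thesis using cs[where A=A and B=B and Q=Q and P=P and R=R and x=x and u=u] S_inv[OF assms] by force
qed

definition gainm :: "real^'n^'n \<Rightarrow> real^'m^'n \<Rightarrow> real^'m^'m \<Rightarrow> real^'n^'n \<Rightarrow> real^'n^'m" where
  "gainm A B R P = matrix_inv (R + transpose B ** P ** B) ** transpose B ** P ** A"

lemma ric_eq:
  assumes "pos_def R" "psd P"
  shows "qf (ric A B Q R P) x = qf Q x + qf R (gainm A B R P *v x)
           + qf P ((A - B ** gainm A B R P) *v x)"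
proof -
  have s: "transpose P = P" "transpose R = R" using assms unfolding pd_qf psd_qf by auto
  define u where "u = - (gainm A B R P *v x)"
  have "u + matrix_inv (transpose B ** P ** B + R) *v (transpose B *v (P *v (A *v x))) = 0"
    by (simp add: u_def gainm_def mv_assoc add.commute)
  then have "qf Q x + qf R u + qf P (A *v x + B *v u) = qf (ric A B Q R P) x"
    using cs[where A=A and B=B and Q=Q and P=P and R=R and x=x and u=u, OF s(1) s(2) S_inv[OF assms]] by simp
  moreover have "qf R u = qf R (gainm A B R P *v x)"
    by (simp add: u_def)
  moreover have "A *v x + B *v u = (A - B ** gainm A B R P) *v x"
    by (simp add: u_def matrix_vector_mult_diff_rdistrib mv_assoc mv_uminus_right)
  ultimately show ?thesis by simp
qed



lemma ABK: "A *v x + B *v (- (K *v x)) = (A - B ** K) *v (x::real^'n)"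
  by (simp add: matrix_vector_mult_diff_rdistrib mv_assoc mv_uminus_right)

lemma ric_mono:
  assumes "pos_def R1" "psd P1" "pos_def R2" "psd P2"
    and "\<And>x. qf Q1 x \<le> qf Q2 x" "\<And>u. qf R1 u \<le> qf R2 u" "\<And>y. qf P1 y \<le> qf P2 y"
  shows "qf (ric A B Q1 R1 P1) x \<le> qf (ric A B Q2 R2 P2) x"
proof -
  define K where "K = gainm A B R2 P2"
  have "qf (ric A B Q1 R1 P1) x \<le> qf Q1 x + qf R1 (- (K *v x)) + qf P1 (A *v x + B *v (- (K *v x)))"
    by (rule ric_le[OF assms(1,2)])
  also have "\<dots> \<le> qf Q2 x + qf R2 (- (K *v x)) + qf P2 (A *v x + B *v (- (K *v x)))"
    using assms(5-7) by (meson add_mono)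
  also have "\<dots> = qf (ric A B Q2 R2 P2) x"
    using ric_eq[OF assms(3,4), of A B Q2 x] by (simp add: K_def ABK)
  finally show ?thesis .
qed

lemma ric_ge_Q:
  assumes "pos_def R" "psd P"
  shows "qf Q x \<le> qf (ric A B Q R P) x"
proof -
  have "0 \<le> qf R u" for u using assms(1) unfolding pd_qf by (cases "u = 0") (auto intro: less_imp_le)
  moreover have "0 \<le> qf P y" for y using assms(2) unfolding psd_qf by auto
  ultimately show ?thesis using ric_eq[OF assms, of A B Q x] by (smt (verit))
qed

text \<open>quadratic form bounds via entries\<close>
lemma qf_abs_le: "\<bar>qf M y\<bar> \<le> (\<Sum>i\<in>UNIV. \<Sum>j\<in>UNIV. \<bar>M $ i $ j\<bar>) * (norm y)^2"
proof -
  have a: "\<bar>qf M y\<bar> \<le> norm y * norm (M *v y)"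
    unfolding qf_def by (rule Cauchy_Schwarz_ineq2)
  have b: "norm (M *v y) \<le> onorm ((*v) M) * norm y"
    by (rule onorm) simp
  have c: "onorm ((*v) M) \<le> (\<Sum>i\<in>UNIV. \<Sum>j\<in>UNIV. \<bar>M $ i $ j\<bar>)"
    by (rule onorm_le_matrix_component_sum)
  have "norm (M *v y) \<le> (\<Sum>i\<in>UNIV. \<Sum>j\<in>UNIV. \<bar>M $ i $ j\<bar>) * norm y"
    using b c by (meson mult_right_mono norm_ge_zero order_trans)
  then have "norm y * norm (M *v y) \<le> norm y * ((\<Sum>i\<in>UNIV. \<Sum>j\<in>UNIV. \<bar>M $ i $ j\<bar>) * norm y)"
    by (simp add: mult_left_mono)
  then show ?thesis using a by (simp add: power2_eq_square mult_ac)
qed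



lemma quad_nonneg_zero:
  fixes a b :: real
  assumes "a \<ge> 0" "b \<ge> 0" "\<And>t. 0 \<le> 2 * t * a + t^2 * b"
  shows "a = 0"
proof (rule ccontr)
  assume "a \<noteq> 0"
  then have a0: "a > 0" using assms(1) by simp
  define t where "t = - a / (b + 1)"
  have "0 \<le> 2 * t * a + t^2 * b" by (rule assms(3))
  then have "0 \<le> (2 * t * a + t^2 * b) * (b+1)^2" using assms(2) by simp
  also have "(2 * t * a + t^2 * b) * (b+1)^2 = -(a^2) * (b + 2)"
  proof -
    have tb: "t * (b + 1) = - a" using assms(2) by (simp add: t_def)
    have "(2 * t * a + t^2 * b) * (b+1)^2 = 2 * a * (b+1) * (t * (b+1)) + b * (t * (b+1))^2"
      by (simp add: power2_eq_square algebra_simps)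
    also have "\<dots> = -(a^2) * (b + 2)" unfolding tb by (simp add: power2_eq_square algebra_simps)
    finally show ?thesis .
  qed
  finally have "0 \<le> -(a^2) * (b + 2)" .
  moreover have "0 < a^2 * (b + 2)" using a0 assms(2) by (intro mult_pos_pos) auto
  ultimately show False by linarith
qed

lemma psd_null:
  assumes sym: "transpose N = N" and nn: "\<And>x. 0 \<le> qf N x" and z: "qf N v = 0"
  shows "N *v v = (0::real^'n)"
proof -
  define w where "w = N *v v"
  have "qf N (v + t *\<^sub>R w) = 2 * t * (w \<bullet> w) + t^2 * qf N w" for t
  proof -
    have "qf N (v + t *\<^sub>R w) = qf N v + t * (v \<bullet> (N *v w)) + t * (w \<bullet> (N *v v)) + t^2 * qf N w"
      by (simp add: qf_def matrix_vector_right_distrib mv_scaleR_right inner_add_left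
          inner_add_right power2_eq_square algebra_simps)
    moreover have "v \<bullet> (N *v w) = w \<bullet> (N *v v)"
      using sym_dot[OF sym] inner_commute by metis
    ultimately show ?thesis using z by (simp add: w_def)
  qed
  then have "0 \<le> 2 * t * (w \<bullet> w) + t^2 * qf N w" for t using nn by metis
  then have "w \<bullet> w = 0" using quad_nonneg_zero[of "w \<bullet> w" "qf N w"] nn by simp
  then show ?thesis by (simp add: w_def)
qed

lemma rayleigh_max:
  fixes M :: "real^'n^'n"
  assumes sym: "transpose M = M"
  shows "\<exists>l\<in>eigenvalues M. \<forall>x. qf M x \<le> l * (x \<bullet> x)"
proof -
  have "continuous_on (sphere (0::real^'n) 1) (qf M)"
    unfolding qf_def by (intro continuous_intros)
  then obtain v where v: "v \<in> sphere 0 1" and vmax: "\<And>y. y \<in> sphere 0 1 \<Longrightarrow> qf M y \<le> qf M v"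
    using continuous_attains_sup[of "sphere (0::real^'n) 1" "qf M"] compact_sphere
    by (metis empty_iff mem_sphere_0 norm_axis_1)
  define l where "l = qf M v"
  have nv: "norm v = 1" using v by simp
  have all: "qf M x \<le> l * (x \<bullet> x)" for x
  proof (cases "x = 0")
    case True then show ?thesis by simp
  next
    case False
    define y where "y = (1 / norm x) *\<^sub>R x"
    have "y \<in> sphere 0 1" using False by (simp add: y_def)
    then have "qf M y \<le> l" using vmax l_def by simp
    moreover have "qf M y = qf M x / (x \<bullet> x)"
      using False by (simp add: y_def qf_scaleR_vec power2_eq_square power_one_over
          dot_square_norm divide_simps)
    moreover have "x \<bullet> x > 0" using False by simp
    ultimately show ?thesis by (simp add: divide_le_eq)
  qed
  define N where "N = l *\<^sub>R mat 1 - M"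
  have symN: "transpose N = N" by (simp add: N_def transpose_diff' transpose_scalar sym)
  have nnN: "0 \<le> qf N x" for x using all[of x] by (simp add: N_def qf_diff qf_scal_id)
  have "qf N v = 0" using nv by (simp add: N_def qf_diff qf_scal_id l_def dot_square_norm)
  then have "N *v v = 0" using psd_null[OF symN nnN] by blast
  then have "M *v v = l *\<^sub>R v"
    by (simp add: N_def matrix_vector_mult_diff_rdistrib mv_scaleR_left)
  moreover have "v \<noteq> 0" using nv by auto
  ultimately have "l \<in> eigenvalues M" unfolding eigenvalues_def by blast
  then show ?thesis using all by blast
qed

lemma mv_uminus_left: "(- M) *v v = - ((M::real^'n^'m) *v v)"
  by (simp add: vec_eq_iff matrix_vector_mult_def sum_negf)

lemma eigenvalues_uminus: "eigenvalues (- M) = uminus ` eigenvalues (M::real^'n^'n)"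
proof -
  have "(- M) *v v = l *\<^sub>R v \<longleftrightarrow> M *v v = (- l) *\<^sub>R v" for v l
    unfolding mv_uminus_left by (metis minus_equation_iff scaleR_minus_left)
  then have E: "l \<in> eigenvalues (- M) \<longleftrightarrow> - l \<in> eigenvalues M" for l
    unfolding eigenvalues_def by simp
  show ?thesis
  proof (intro equalityI subsetI)
    fix l assume "l \<in> eigenvalues (- M)"
    then have "- l \<in> eigenvalues M" using E by blast
    then show "l \<in> uminus ` eigenvalues M" by (rule rev_image_eqI) simp
  next
    fix l assume "l \<in> uminus ` eigenvalues M"
    then obtain m where "m \<in> eigenvalues M" "l = - m" by blast
    then show "l \<in> eigenvalues (- M)" using E by simp
  qed
qed

lemma rayleigh_min:
  fixes M :: "real^'n^'n"
  assumes sym: "transpose M = M"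
  shows "\<exists>l\<in>eigenvalues M. \<forall>x. l * (x \<bullet> x) \<le> qf M x"
proof -
  have "transpose (- M) = - M" using sym by (simp add: transpose_neg')
  from rayleigh_max[OF this] obtain l where l: "l \<in> eigenvalues (- M)" "\<forall>x. qf (- M) x \<le> l * (x \<bullet> x)"
    by blast
  have "qf (- M) x = - qf M x" for x
    by (simp add: qf_def mv_uminus_left)
  then have "\<forall>x. (- l) * (x \<bullet> x) \<le> qf M x" using l(2) by (metis minus_le_iff mult_minus_left)
  moreover have "- l \<in> eigenvalues M" using l(1) eigenvalues_uminus by force
  ultimately show ?thesis by blast
qed

lemma eigenvalues_finite:
  fixes M :: "real^'n^'n"
  assumes sym: "transpose M = M"
  shows "finite (eigenvalues M)"
proof (rule ccontr)
  assume "infinite (eigenvalues M)"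
  then obtain F where F: "finite F" "card F = Suc CARD('n)" "F \<subseteq> eigenvalues M"
    using infinite_arbitrarily_large by blast
  define ev where "ev l = (SOME v. v \<noteq> 0 \<and> M *v v = l *\<^sub>R v)" for l
  have ev: "ev l \<noteq> 0 \<and> M *v ev l = l *\<^sub>R ev l" if "l \<in> eigenvalues M" for l
  proof -
    from that have "\<exists>v. v \<noteq> 0 \<and> M *v v = l *\<^sub>R v" by (simp add: eigenvalues_def)
    then show ?thesis unfolding ev_def by (rule someI_ex)
  qed
  have orth: "ev l \<bullet> ev m = 0" if "l \<in> F" "m \<in> F" "l \<noteq> m" for l m
  proof -
    have "l * (ev l \<bullet> ev m) = (M *v ev l) \<bullet> ev m" using ev F(3) that by auto
    also have "\<dots> = ev l \<bullet> (M *v ev m)" by (rule sym_dot[OF sym, symmetric])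
    also have "\<dots> = m * (ev l \<bullet> ev m)" using ev F(3) that by auto
    finally show ?thesis using that(3) by simp
  qed
  have inj: "inj_on ev F"
  proof (rule inj_onI)
    fix l m assume "l \<in> F" "m \<in> F" "ev l = ev m"
    moreover have "l \<in> eigenvalues M" "m \<in> eigenvalues M" using F(3) \<open>l \<in> F\<close> \<open>m \<in> F\<close> by auto
    ultimately have "l *\<^sub>R ev l = m *\<^sub>R ev l" "ev l \<noteq> 0" using ev by metis+
    then show "l = m" by simp
  qed
  have "pairwise orthogonal (ev ` F)"
    unfolding pairwise_def orthogonal_def using orth by force
  moreover have "0 \<notin> ev ` F" using ev F(3) by auto
  ultimately have "independent (ev ` F)" by (rule pairwise_orthogonal_independent)
  then have "card (ev ` F) \<le> CARD('n)" using independent_bound by fastforce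
  moreover have "card (ev ` F) = Suc CARD('n)" using card_image[OF inj] F(2) by simp
  ultimately show False by simp
qed

lemma eig_bounds:
  fixes M :: "real^'n^'n"
  assumes sym: "transpose M = M"
  shows "qf M x \<le> eig_max M * (x \<bullet> x)" "eig_min M * (x \<bullet> x) \<le> qf M x"
proof -
  have fin: "finite (eigenvalues M)" by (rule eigenvalues_finite[OF sym])
  obtain l where l: "l \<in> eigenvalues M" "\<forall>x. qf M x \<le> l * (x \<bullet> x)" using rayleigh_max[OF sym] by blast
  have "l \<le> eig_max M" unfolding eig_max_def using fin l(1) by simp
  then have "l * (x \<bullet> x) \<le> eig_max M * (x \<bullet> x)" by (rule mult_right_mono) simp
  then show "qf M x \<le> eig_max M * (x \<bullet> x)" using l(2) by (blast intro: order_trans)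
  obtain m where m: "m \<in> eigenvalues M" "\<forall>x. m * (x \<bullet> x) \<le> qf M x" using rayleigh_min[OF sym] by blast
  have "eig_min M \<le> m" unfolding eig_min_def using fin m(1) by simp
  then have "eig_min M * (x \<bullet> x) \<le> m * (x \<bullet> x)" by (rule mult_right_mono) simp
  then show "eig_min M * (x \<bullet> x) \<le> qf M x" using m(2) by (blast intro: order_trans)
qed

lemma eig_lower:
  fixes M :: "real^'n^'n"
  assumes sym: "transpose M = M" and lb: "\<And>x. c * (x \<bullet> x) \<le> qf M x"
  shows "c \<le> eig_min M" "c \<le> eig_max M"
proof -
  have fin: "finite (eigenvalues M)" by (rule eigenvalues_finite[OF sym])
  obtain l0 where "l0 \<in> eigenvalues M" using rayleigh_max[OF sym] by blast
  then have ne: "eigenvalues M \<noteq> {}" by auto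
  have ge: "c \<le> l" if "l \<in> eigenvalues M" for l
  proof -
    from that have "\<exists>v. v \<noteq> 0 \<and> M *v v = l *\<^sub>R v" by (simp add: eigenvalues_def)
    then obtain v where v: "v \<noteq> 0" "M *v v = l *\<^sub>R v" by blast
    have "qf M v = l * (v \<bullet> v)" using v(2) by (simp add: qf_def)
    then have "c * (v \<bullet> v) \<le> l * (v \<bullet> v)" using lb[of v] by simp
    moreover have "v \<bullet> v > 0" using v(1) by simp
    ultimately show ?thesis by (simp add: mult_le_cancel_right_pos)
  qed
  show "c \<le> eig_min M" unfolding eig_min_def using fin ne ge by (simp add: Min_ge_iff)
  have "eig_max M \<in> eigenvalues M" unfolding eig_max_def using fin ne by (rule Max_in)
  then show "c \<le> eig_max M" by (rule ge)
qed



lemma qf_eq_imp_eq: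
  fixes M N :: "real^'n^'n"
  assumes "transpose M = M" "transpose N = N" "\<And>x. qf M x = qf N x"
  shows "M = N"
proof -
  define L where "L = M - N"
  have sL: "transpose L = L" using assms by (simp add: L_def transpose_diff')
  have z: "qf L x = 0" for x using assms(3) by (simp add: L_def qf_diff)
  have "L *v v = 0" for v by (rule psd_null[OF sL]) (simp_all add: z)
  then have "M *v v = N *v v" for v by (simp add: L_def matrix_vector_mult_diff_rdistrib)
  then show ?thesis by (simp add: matrix_eq)
qed

lemma geom_le_zero:
  fixes a b c :: real
  assumes "\<And>k. a \<le> b * c^k" "0 \<le> c" "c < 1"
  shows "a \<le> 0"
proof -
  have "(\<lambda>k. b * c^k) \<longlonglongrightarrow> b * 0"
    by (intro tendsto_mult tendsto_const LIMSEQ_power_zero) (use assms in simp)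
  then show ?thesis using assms(1) by (intro LIMSEQ_le_const[of "\<lambda>k. b * c^k"]) auto
qed

lemma pd_psd: "pos_def P \<Longrightarrow> psd P"
  unfolding pd_qf psd_qf by (metis less_imp_le order_refl qf_zero_vec)

lemma dare_le:
  fixes A :: "real^'n^'n" and B :: "real^'m^'n"
  assumes sQ: "transpose Q = Q" and qpos: "\<And>x. q * (x \<bullet> x) \<le> qf Q x" and q: "0 < q"
    and R: "pos_def R"
    and P1: "pos_def P1" "P1 = ric A B Q R P1"
    and P2: "pos_def P2" "P2 = ric A B Q R P2"
  shows "qf P1 x \<le> qf P2 x"
proof -
  define K where "K = gainm A B R P2"
  define D where "D = A - B ** K"
  have e2: "qf P2 y = qf Q y + qf R (K *v y) + qf P2 (D *v y)" for y
    using ric_eq[OF R pd_psd[OF P2(1)], of A B Q y] P2(2) by (simp add: K_def D_def)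
  have e1: "qf P1 y \<le> qf Q y + qf R (K *v y) + qf P1 (D *v y)" for y
    using ric_le[OF R pd_psd[OF P1(1)], of A B Q y "- (K *v y)"] P1(2) by (simp add: D_def ABK)
  have step: "qf (P1 - P2) y \<le> qf (P1 - P2) (D *v y)" for y
    using e1[of y] e2[of y] by (simp add: qf_diff)
  define y where "y k = ((*v) D ^^ k) x" for k
  have ysuc: "y (Suc k) = D *v y k" for k by (simp add: y_def)
  have it: "qf (P1 - P2) x \<le> qf (P1 - P2) (y k)" for k
  proof (induction k)
    case 0 then show ?case by (simp add: y_def)
  next
    case (Suc k) then show ?case using step[of "y k"] ysuc[of k] by simp
  qed
  have sP2: "transpose P2 = P2" using P2(1) unfolding pd_qf by simp
  define lam where "lam = eig_max P2"
  define mu where "mu = eig_min P2"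
  have P2geQ: "q * (z \<bullet> z) \<le> qf P2 z" for z
    using ric_ge_Q[OF R pd_psd[OF P2(1)], where Q=Q and A=A and B=B and x=z] P2(2) qpos[of z] by simp
  have lamq: "q \<le> lam" "q \<le> mu" using eig_lower[OF sP2 P2geQ] by (simp_all add: lam_def mu_def)
  have lamb: "qf P2 z \<le> lam * (z \<bullet> z)" "mu * (z \<bullet> z) \<le> qf P2 z" for z
    using eig_bounds[OF sP2] by (simp_all add: lam_def mu_def)
  define c where "c = 1 - q / lam"
  have c01: "0 \<le> c" "c < 1" using lamq q by (simp_all add: c_def)
  have dec: "qf P2 (D *v z) \<le> c * qf P2 z" for z
  proof -
    have "0 \<le> qf R (K *v z)" using R unfolding pd_qf by (cases "K *v z = 0") (auto intro: less_imp_le)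
    then have a: "qf P2 (D *v z) \<le> qf P2 z - q * (z \<bullet> z)" using e2[of z] qpos[of z] by simp
    have "q / lam * qf P2 z \<le> q / lam * (lam * (z \<bullet> z))"
      using lamb(1)[of z] lamq q by (intro mult_left_mono) auto
    also have "\<dots> = q * (z \<bullet> z)" using lamq q by simp
    finally show ?thesis using a by (simp add: c_def algebra_simps)
  qed
  have ydec: "qf P2 (y k) \<le> c^k * qf P2 x" for k
  proof (induction k)
    case 0 then show ?case by (simp add: y_def)
  next
    case (Suc k)
    have "qf P2 (y (Suc k)) \<le> c * qf P2 (y k)" using dec ysuc by simp
    also have "\<dots> \<le> c * (c^k * qf P2 x)" using Suc c01 by (intro mult_left_mono) auto
    finally show ?case by simp
  qed
  define C where "C = (\<Sum>i\<in>UNIV. \<Sum>j\<in>UNIV. \<bar>(P1 - P2) $ i $ j\<bar>)"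
  have C0: "0 \<le> C" unfolding C_def by (intro sum_nonneg) auto
  have bnd: "qf (P1 - P2) x \<le> (C * qf P2 x / mu) * c^k" for k
  proof -
    have "qf (P1 - P2) x \<le> C * (norm (y k))^2"
      using it[of k] qf_abs_le[of "P1 - P2" "y k"] by (simp add: C_def)
    also have "(norm (y k))^2 \<le> c^k * qf P2 x / mu"
    proof -
      have "mu * (norm (y k))^2 \<le> c^k * qf P2 x"
        using lamb(2)[of "y k"] ydec[of k] by (simp add: dot_square_norm)
      then show ?thesis using lamq q by (simp add: field_simps)
    qed
    then have "C * (norm (y k))^2 \<le> C * (c^k * qf P2 x / mu)" using C0 by (rule mult_left_mono)
    finally show ?thesis by (simp add: mult_ac)
  qed
  have "qf (P1 - P2) x \<le> 0" by (rule geom_le_zero[OF bnd c01])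
  then show ?thesis by (simp add: qf_diff)
qed

lemma dare_unique:
  fixes A :: "real^'n^'n" and B :: "real^'m^'n"
  assumes sQ: "transpose Q = Q" and qpos: "\<And>x. q * (x \<bullet> x) \<le> qf Q x" and q: "0 < q"
    and R: "pos_def R"
    and P1: "pos_def P1" "P1 = ric A B Q R P1"
    and P2: "pos_def P2" "P2 = ric A B Q R P2"
  shows "P1 = P2"
proof (rule qf_eq_imp_eq)
  show "transpose P1 = P1" "transpose P2 = P2" using P1(1) P2(1) unfolding pd_qf by auto
  show "qf P1 x = qf P2 x" for x
    using dare_le[OF sQ qpos q R P1 P2, of x] dare_le[OF sQ qpos q R P2 P1, of x] by simp
qed



primrec traj :: "real^'n^'n \<Rightarrow> real^'m^'n \<Rightarrow> real^'n \<Rightarrow> (nat \<Rightarrow> real^'m) \<Rightarrow> nat \<Rightarrow> real^'n" where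
  "traj A B x u 0 = x"
| "traj A B x u (Suc k) = A *v traj A B x u k + B *v u k"

lemma traj_add: "traj A B 0 (\<lambda>j. u j + v j) k = traj A B 0 u k + traj A B 0 v k"
  by (induction k) (simp_all add: matrix_vector_right_distrib algebra_simps)

lemma traj_scale: "traj A B 0 (\<lambda>j. c *\<^sub>R u j) k = c *\<^sub>R traj A B 0 u k"
  by (induction k) (simp_all add: mv_scaleR_right scaleR_add_right)

lemma traj_super: "traj A B x u k = traj A B x (\<lambda>_. 0) k + traj A B 0 u k"
  by (induction k) (simp_all add: matrix_vector_right_distrib algebra_simps)

lemma traj_imp_zero: "j \<le> m \<Longrightarrow> traj A B 0 (\<lambda>j. if j = m then v else 0) j = 0"
  by (induction j) auto

lemma traj_imp: "traj A B 0 (\<lambda>j. if j = m then v else 0) (Suc m + i) = (((*v) A) ^^ i) (B *v v)"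
proof (induction i)
  case 0 then show ?case using traj_imp_zero[of m m A B v] by simp
next
  case (Suc i) then show ?case by simp
qed

lemma reach:
  fixes A :: "real^'n^'n" and B :: "real^'m^'n"
  assumes "controllable A B"
  shows "\<exists>u. traj A B 0 u CARD('n) = y"
proof -
  define n where "n = CARD('n)"
  define S where "S = {y. \<exists>u. traj A B 0 u n = y}"
  have sub: "subspace S"
    unfolding subspace_def S_def
  proof (intro conjI ballI allI)
    show "0 \<in> {y. \<exists>u. traj A B 0 u n = y}"
      using traj_scale[of A B 0 "\<lambda>_. 0" n] by auto
  next
    fix x y assume "x \<in> {y. \<exists>u. traj A B 0 u n = y}" "y \<in> {y. \<exists>u. traj A B 0 u n = y}"
    then obtain u v where "traj A B 0 u n = x" "traj A B 0 v n = y" by blast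
    then show "x + y \<in> {y. \<exists>u. traj A B 0 u n = y}" using traj_add[of A B u v n] by auto
  next
    fix c x assume "x \<in> {y. \<exists>u. traj A B 0 u n = y}"
    then obtain u where "traj A B 0 u n = x" by blast
    then show "c *\<^sub>R x \<in> {y. \<exists>u. traj A B 0 u n = y}" using traj_scale[of A B c u n] by auto
  qed
  have "(\<Union>k<n. range (\<lambda>u. (((*v) A) ^^ k) (B *v u))) \<subseteq> S"
  proof (intro subsetI)
    fix z assume "z \<in> (\<Union>k<n. range (\<lambda>u. (((*v) A) ^^ k) (B *v u)))"
    then obtain k v where kv: "k < n" "z = (((*v) A) ^^ k) (B *v v)" by blast
    have "Suc (n - Suc k) + k = n" using kv(1) by simp
    then have "traj A B 0 (\<lambda>j. if j = n - Suc k then v else 0) n = z"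
      using traj_imp[of A B "n - Suc k" v k] kv(2) by simp
    then show "z \<in> S" unfolding S_def by blast
  qed
  then have "span (\<Union>k<n. range (\<lambda>u. (((*v) A) ^^ k) (B *v u))) \<subseteq> S"
    using sub by (rule span_minimal)
  then have "y \<in> S" using assms unfolding controllable_def n_def by auto
  then show ?thesis unfolding S_def n_def by auto
qed

lemma traj_trunc: "k \<le> n \<Longrightarrow> traj A B x (\<lambda>j. if j < n then u j else 0) k = traj A B x u k"
  by (induction k) auto

lemma traj_after:
  assumes "traj A B x u n = 0" "\<forall>j\<ge>n. u j = 0" "n \<le> k"
  shows "traj A B x u k = 0"
  using assms(3)
proof (induction k rule: dec_induct)
  case base then show ?case using assms(1) by simp
next
  case (step k) then show ?case using assms(2) by simp
qed

lemma steer: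
  fixes A :: "real^'n^'n" and B :: "real^'m^'n"
  assumes "controllable A B"
  shows "\<exists>u. (\<forall>j\<ge>CARD('n). u j = 0) \<and> (\<forall>k\<ge>CARD('n). traj A B x u k = 0)"
proof -
  obtain u where u: "traj A B 0 u CARD('n) = - traj A B x (\<lambda>_. 0) CARD('n)"
    using reach[OF assms] by blast
  define u' where "u' j = (if j < CARD('n) then u j else 0)" for j
  have "traj A B x u' CARD('n) = traj A B x u CARD('n)"
    unfolding u'_def by (rule traj_trunc) simp
  also have "\<dots> = 0" using traj_super[of A B x u] u by simp
  finally have z: "traj A B x u' CARD('n) = 0" .
  have "\<forall>j\<ge>CARD('n). u' j = 0" by (simp add: u'_def)
  then show ?thesis using traj_after[OF z] by blast
qed



lemma qf_entries: "qf M x = (\<Sum>i\<in>UNIV. \<Sum>j\<in>UNIV. x $ i * M $ i $ j * x $ j)"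
  by (simp add: qf_def inner_vec_def matrix_vector_mult_def sum_distrib_left mult.assoc)

lemma entry_polar:
  assumes "transpose M = (M::real^'n^'n)"
  shows "M $ i $ j = (qf M (axis i 1 + axis j 1) - qf M (axis i 1) - qf M (axis j 1)) / 2"
proof -
  have "qf M (axis i 1 + axis j 1) = qf M (axis i 1) + axis i 1 \<bullet> (M *v axis j 1)
        + axis j 1 \<bullet> (M *v axis i 1) + qf M (axis j 1)"
    by (simp add: qf_def matrix_vector_right_distrib inner_add_left inner_add_right)
  moreover have "axis j 1 \<bullet> (M *v axis i 1) = axis i 1 \<bullet> (M *v axis j 1)"
    using sym_dot[OF assms] inner_commute by metis
  moreover have "axis i 1 \<bullet> (M *v axis j 1) = M $ i $ j"
  proof -
    have "axis i 1 \<bullet> (M *v axis j 1) = (M *v axis j 1) $ i" by (simp add: inner_axis')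
    also have "\<dots> = M $ i $ j"
      by (simp add: matrix_vector_mult_def axis_def if_distrib cong: if_cong)
    finally show ?thesis .
  qed
  ultimately show ?thesis by simp
qed

context
  fixes A :: "real^'n^'n" and B :: "real^'m^'n" and Q :: "real^'n^'n" and R :: "real^'m^'m"
    and q r :: real
  assumes ctrl: "controllable A B"
    and sQ: "transpose Q = Q" and q: "0 < q" and qpos: "\<And>x. q * (x \<bullet> x) \<le> qf Q x"
    and Rpd: "pos_def R" and r: "0 < r" and rpos: "\<And>u. r * (u \<bullet> u) \<le> qf R u"
begin

definition Pk :: "nat \<Rightarrow> real^'n^'n" where "Pk k = (ric A B Q R ^^ k) 0"

lemma Pk_Suc: "Pk (Suc k) = ric A B Q R (Pk k)"
  by (simp add: Pk_def)

lemma Qnn: "0 \<le> qf Q x"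
  using qpos[of x] q by (smt (verit) inner_ge_zero mult_nonneg_nonneg)

lemma Pk_psd: "psd (Pk k)"
proof (induction k)
  case 0 then show ?case by (simp add: Pk_def psd_qf transpose_def vec_eq_iff)
next
  case (Suc k)
  have "transpose (Pk (Suc k)) = Pk (Suc k)"
    unfolding Pk_Suc using Suc Rpd sQ S_inv[OF Rpd Suc] unfolding psd_qf pd_qf
    by (intro ric_sym) auto
  moreover have "0 \<le> qf (Pk (Suc k)) x" for x
    unfolding Pk_Suc using ric_ge_Q[OF Rpd Suc, where Q=Q and A=A and B=B and x=x] Qnn[of x] by simp
  ultimately show ?case unfolding psd_qf by simp
qed

lemma Pk_sym: "transpose (Pk k) = Pk k" using Pk_psd unfolding psd_qf by simp

lemma Pk_mono: "qf (Pk k) x \<le> qf (Pk (Suc k)) x"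
proof (induction k arbitrary: x)
  case 0 then show ?case using Pk_psd[of 1] by (simp add: Pk_def psd_qf)
next
  case (Suc k)
  show ?case unfolding Pk_Suc[of "Suc k"] Pk_Suc[of k]
    by (rule ric_mono[OF Rpd Pk_psd Rpd]) (use Pk_psd[of "Suc k"] Suc in \<open>simp_all add: Pk_Suc\<close>)
qed

lemma traj_shift: "traj A B (A *v x + B *v u 0) (\<lambda>j. u (Suc j)) j = traj A B x u (Suc j)"
  by (induction j) auto

lemma Pk_cost: "qf (Pk k) x \<le> (\<Sum>j<k. qf Q (traj A B x u j) + qf R (u j))"
proof (induction k arbitrary: x u)
  case 0 then show ?case by (simp add: Pk_def)
next
  case (Suc k)
  have "qf (Pk (Suc k)) x \<le> qf Q x + qf R (u 0) + qf (Pk k) (A *v x + B *v u 0)"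
    unfolding Pk_Suc by (rule ric_le[OF Rpd Pk_psd])
  also have "qf (Pk k) (A *v x + B *v u 0) \<le>
      (\<Sum>j<k. qf Q (traj A B x u (Suc j)) + qf R (u (Suc j)))"
    using Suc[of "A *v x + B *v u 0" "\<lambda>j. u (Suc j)"] by (simp add: traj_shift)
  finally have "qf (Pk (Suc k)) x \<le> qf Q x + qf R (u 0) +
      (\<Sum>j<k. qf Q (traj A B x u (Suc j)) + qf R (u (Suc j)))" by simp
  moreover have "(\<Sum>j<Suc k. qf Q (traj A B x u j) + qf R (u j)) = (qf Q (traj A B x u 0) + qf R (u 0)) +
      (\<Sum>j<k. qf Q (traj A B x u (Suc j)) + qf R (u (Suc j)))"
    by (rule sum.lessThan_Suc_shift)
  ultimately show ?case by (simp del: traj.simps(2))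
qed

lemma Pk_bounded: "\<exists>J. \<forall>k. qf (Pk k) x \<le> J"
proof -
  obtain u where u: "\<forall>j\<ge>CARD('n). u j = 0" "\<forall>k\<ge>CARD('n). traj A B x u k = 0"
    using steer[OF ctrl] by blast
  define c where "c j = qf Q (traj A B x u j) + qf R (u j)" for j
  have c0: "0 \<le> c j" for j
  proof -
    have "0 \<le> qf R (u j)" using Rpd unfolding pd_qf by (cases "u j = 0") (auto intro: less_imp_le)
    then show ?thesis using Qnn by (simp add: c_def)
  qed
  have cz: "c j = 0" if "j \<ge> CARD('n)" for j using u that by (simp add: c_def)
  have "qf (Pk k) x \<le> (\<Sum>j<CARD('n). c j)" for k
  proof -
    have "qf (Pk k) x \<le> (\<Sum>j<k. c j)" using Pk_cost[of k x u] by (simp add: c_def)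
    also have "\<dots> \<le> (\<Sum>j<max k CARD('n). c j)" by (rule sum_mono2) (auto simp: c0)
    also have "\<dots> = (\<Sum>j<CARD('n). c j)"
      by (rule sum.mono_neutral_left[symmetric]) (auto simp: cz)
    finally show ?thesis .
  qed
  then show ?thesis by blast
qed

definition Lq :: "real^'n \<Rightarrow> real" where "Lq x = lim (\<lambda>k. qf (Pk k) x)"

lemma Lq_lim: "(\<lambda>k. qf (Pk k) x) \<longlonglongrightarrow> Lq x"
proof -
  obtain J where "\<forall>k. qf (Pk k) x \<le> J" using Pk_bounded by blast
  moreover have "incseq (\<lambda>k. qf (Pk k) x)" by (rule incseq_SucI) (rule Pk_mono)
  ultimately obtain L where "(\<lambda>k. qf (Pk k) x) \<longlonglongrightarrow> L" using incseq_convergent by blast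
  then show ?thesis unfolding Lq_def using limI by auto
qed

definition Pinf :: "real^'n^'n" where
  "Pinf = (\<chi> i j. (Lq (axis i 1 + axis j 1) - Lq (axis i 1) - Lq (axis j 1)) / 2)"

lemma Pk_entry_lim: "(\<lambda>k. Pk k $ i $ j) \<longlonglongrightarrow> Pinf $ i $ j"
proof -
  have "(\<lambda>k. (qf (Pk k) (axis i 1 + axis j 1) - qf (Pk k) (axis i 1) - qf (Pk k) (axis j 1)) / 2)
        \<longlonglongrightarrow> (Lq (axis i 1 + axis j 1) - Lq (axis i 1) - Lq (axis j 1)) / 2"
    by (auto intro!: tendsto_intros Lq_lim)
  moreover have "(\<lambda>k. Pk k $ i $ j) = (\<lambda>k. (qf (Pk k) (axis i 1 + axis j 1) - qf (Pk k) (axis i 1) - qf (Pk k) (axis j 1)) / 2)"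
    by (rule ext, rule entry_polar[OF Pk_sym])
  ultimately show ?thesis unfolding Pinf_def by simp
qed

lemma Pk_qf_lim: "(\<lambda>k. qf (Pk k) x) \<longlonglongrightarrow> qf Pinf x"
  unfolding qf_entries by (intro tendsto_intros Pk_entry_lim)

lemma Pinf_sym: "transpose Pinf = Pinf"
  unfolding Pinf_def transpose_def by (simp add: vec_eq_iff add.commute)

lemma Pk_le_Pinf: "qf (Pk k) x \<le> qf Pinf x"
proof -
  have "incseq (\<lambda>k. qf (Pk k) x)" by (rule incseq_SucI) (rule Pk_mono)
  then show ?thesis using incseq_le Pk_qf_lim by blast
qed

lemma Pinf_pd: "pos_def Pinf"
proof -
  have "q * (x \<bullet> x) \<le> qf Pinf x" for x
  proof -
    have "qf Q x \<le> qf (Pk 1) x"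
      using ric_ge_Q[OF Rpd Pk_psd[of 0], where Q=Q and A=A and B=B and x=x] by (simp add: Pk_Suc[of 0, simplified])
    then show ?thesis using qpos[of x] Pk_le_Pinf[of 1 x] by simp
  qed
  then show ?thesis unfolding pd_qf using Pinf_sym q
    by (metis inner_gt_zero_iff mult_pos_pos order_less_le_trans)
qed

lemma Pinf_psd: "psd Pinf" using Pinf_pd by (rule pd_psd)

lemma Pinf_le_ric: "qf Pinf x \<le> qf (ric A B Q R Pinf) x"
proof -
  have "qf (Pk (Suc k)) x \<le> qf (ric A B Q R Pinf) x" for k
    unfolding Pk_Suc by (rule ric_mono[OF Rpd Pk_psd Rpd Pinf_psd]) (simp_all add: Pk_le_Pinf)
  moreover have "(\<lambda>k. qf (Pk (Suc k)) x) \<longlonglongrightarrow> qf Pinf x"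
    using Pk_qf_lim by (rule LIMSEQ_Suc)
  ultimately show ?thesis by (intro LIMSEQ_le_const2[of "\<lambda>k. qf (Pk (Suc k)) x"]) auto
qed

lemma ric_le_Pinf: "qf (ric A B Q R Pinf) x \<le> qf Pinf x"
proof -
  define E where "E k = (\<Sum>i\<in>UNIV. \<Sum>j\<in>UNIV. \<bar>(Pinf - Pk k) $ i $ j\<bar>)" for k
  have E0: "E \<longlonglongrightarrow> 0"
  proof -
    have "(\<lambda>k. (\<Sum>i\<in>UNIV. \<Sum>j\<in>UNIV. \<bar>Pinf $ i $ j - Pk k $ i $ j\<bar>)) \<longlonglongrightarrow>
          (\<Sum>i\<in>(UNIV::'n set). \<Sum>j\<in>(UNIV::'n set). 0)"
    proof (intro tendsto_sum tendsto_rabs_zero)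
      fix i j
      show "(\<lambda>k. Pinf $ i $ j - Pk k $ i $ j) \<longlonglongrightarrow> 0"
        using tendsto_diff[OF tendsto_const Pk_entry_lim, of "Pinf $ i $ j" i j] by simp
    qed
    then show ?thesis unfolding E_def by simp
  qed
  define b where "b = qf Pinf x / r"
  define My where "My = norm (A *v x) + onorm ((*v) B) * sqrt b"
  have key: "qf (ric A B Q R Pinf) x \<le> qf Pinf x + E k * My^2" for k
  proof -
    define K where "K = gainm A B R (Pk k)"
    define D where "D = A - B ** K"
    have e: "qf (Pk (Suc k)) x = qf Q x + qf R (K *v x) + qf (Pk k) (D *v x)"
      unfolding Pk_Suc using ric_eq[OF Rpd Pk_psd[of k], of A B Q x] by (simp add: K_def D_def)
    have l: "qf (ric A B Q R Pinf) x \<le> qf Q x + qf R (K *v x) + qf Pinf (D *v x)"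
      using ric_le[OF Rpd Pinf_psd, of A B Q x "- (K *v x)"] by (simp add: D_def ABK)
    have d: "qf Pinf (D *v x) - qf (Pk k) (D *v x) \<le> E k * (norm (D *v x))^2"
      using qf_abs_le[of "Pinf - Pk k" "D *v x"] by (simp add: E_def qf_diff)
    have nn: "0 \<le> qf (Pk k) (D *v x)" using Pk_psd unfolding psd_qf by simp
    have "qf R (K *v x) \<le> qf Pinf x"
      using e Qnn[of x] nn Pk_le_Pinf[of "Suc k" x] by simp
    then have "r * ((K *v x) \<bullet> (K *v x)) \<le> qf Pinf x" using rpos[of "K *v x"] by simp
    then have "(norm (K *v x))^2 \<le> b" using r by (simp add: b_def dot_square_norm field_simps)
    then have nK: "norm (K *v x) \<le> sqrt b" using real_le_rsqrt by blast
    have "norm (D *v x) \<le> norm (A *v x) + norm (B *v (K *v x))"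
      by (simp add: D_def matrix_vector_mult_diff_rdistrib mv_assoc norm_triangle_ineq4)
    also have "norm (B *v (K *v x)) \<le> onorm ((*v) B) * norm (K *v x)" by (rule onorm) simp
    also have "\<dots> \<le> onorm ((*v) B) * sqrt b"
      using nK by (intro mult_left_mono onorm_pos_le) simp_all
    finally have "norm (D *v x) \<le> My" by (simp add: My_def)
    then have "(norm (D *v x))^2 \<le> My^2" by (intro power_mono) simp_all
    moreover have "0 \<le> E k" unfolding E_def by (intro sum_nonneg) auto
    ultimately have "E k * (norm (D *v x))^2 \<le> E k * My^2" by (rule mult_left_mono)
    then show ?thesis using e l d Pk_le_Pinf[of "Suc k" x] by simp
  qed
  have "(\<lambda>k. qf Pinf x + E k * My^2) \<longlonglongrightarrow> qf Pinf x + 0 * My^2"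
    by (intro tendsto_intros E0)
  then show ?thesis using key by (intro LIMSEQ_le_const[of "\<lambda>k. qf Pinf x + E k * My^2"]) auto
qed

lemma Pinf_fix: "Pinf = ric A B Q R Pinf"
proof (rule qf_eq_imp_eq)
  show "transpose Pinf = Pinf" by (rule Pinf_sym)
  show "transpose (ric A B Q R Pinf) = ric A B Q R Pinf"
    using Rpd sQ Pinf_sym S_inv[OF Rpd Pinf_psd] unfolding pd_qf by (intro ric_sym) auto
  show "qf Pinf x = qf (ric A B Q R Pinf) x" for x
    using Pinf_le_ric ric_le_Pinf by (meson order_antisym)
qed

lemma dare_sol_props: "pos_def (dare_sol A B Q R) \<and> dare_sol A B Q R = ric A B Q R (dare_sol A B Q R)"
  unfolding dare_sol_def
proof (rule theI[of _ Pinf])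
  show "pos_def Pinf \<and> Pinf = ric A B Q R Pinf" using Pinf_pd Pinf_fix by simp
  show "pos_def P \<and> P = ric A B Q R P \<Longrightarrow> P = Pinf" for P
    using dare_unique[OF sQ qpos q Rpd _ _ Pinf_pd Pinf_fix] by blast
qed

end



lemma scal_id:
  assumes "0 < (c::real)"
  shows "transpose (c *\<^sub>R mat 1 :: real^'n^'n) = c *\<^sub>R mat 1"
    "pos_def (c *\<^sub>R mat 1 :: real^'n^'n)"
    "\<And>x::real^'n. c * (x \<bullet> x) \<le> qf (c *\<^sub>R mat 1) x"
  using assms by (auto simp: transpose_scalar pd_qf qf_scal_id)

lemma loewner_qf: "loewner_le X Y \<longleftrightarrow> transpose (Y - X) = Y - X \<and> (\<forall>x. qf X x \<le> qf Y x)"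
  by (simp add: loewner_le_def psd_qf qf_diff)

lemma sym_from_le:
  assumes "loewner_le X Y" "transpose X = X"
  shows "transpose Y = Y"
  using assms unfolding loewner_qf by (simp add: transpose_diff')

lemma sym_from_le':
  assumes "loewner_le X Y" "transpose Y = Y"
  shows "transpose X = X"
  using assms unfolding loewner_qf by (simp add: transpose_diff')

lemma dare_sol_scal:
  fixes A :: "real^'n^'n" and B :: "real^'m^'n"
  assumes "controllable A B" "0 < q" "0 < r"
  shows "pos_def (dare_sol A B (q *\<^sub>R mat 1) (r *\<^sub>R mat 1)) \<and>
    dare_sol A B (q *\<^sub>R mat 1) (r *\<^sub>R mat 1) =
      ric A B (q *\<^sub>R mat 1) (r *\<^sub>R mat 1) (dare_sol A B (q *\<^sub>R mat 1) (r *\<^sub>R mat 1))"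
  by (rule dare_sol_props[OF assms(1) scal_id(1)[OF assms(2)] assms(2) scal_id(3)[OF assms(2)]
      scal_id(2)[OF assms(3)] assms(3) scal_id(3)[OF assms(3)]])



theorem lemma14:
  fixes A :: "real^'n^'n" and B :: "real^'m^'n"
    and Q :: "nat \<Rightarrow> real^'n^'n" and R :: "nat \<Rightarrow> real^'m^'m"
    and N :: nat and mu_f mu_g l_f l_g :: real
  assumes "0 < mu_f" and "0 < mu_g" and "0 < l_f" and "0 < l_g"
    and "mu_f \<le> l_f" and "mu_g \<le> l_g"
    and "controllable A B"
    and "\<forall>t<N. Q t \<in> Qset mu_f l_f"
    and "\<forall>t<N. R t \<in> Qset mu_g l_g"
    and "Q N \<in> Pset A B mu_f l_f mu_g l_g"
  shows "(let Pbar = dare_sol A B (l_f *\<^sub>R mat 1) (l_g *\<^sub>R mat 1);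
              Punder = dare_sol A B (mu_f *\<^sub>R mat 1) (mu_g *\<^sub>R mat 1);
              c7 = sqrt (eig_max Pbar / eig_min Punder);
              c2 = sqrt (1 - mu_f / eig_max Pbar)
          in 0 \<le> c2 \<and> c2 < 1 \<and>
             (\<forall>t0 t. t0 \<le> t \<and> t \<le> N \<longrightarrow>
                mnorm (Phi (closed_loop A B Q R N) t t0) \<le> c7 * c2 ^ (t - t0)))"
proof -
  note mf = assms(1) and mg = assms(2) and lf = assms(3) and lg = assms(4)
  define Pbar where "Pbar = dare_sol A B (l_f *\<^sub>R mat 1) (l_g *\<^sub>R mat 1)"
  define Punder where "Punder = dare_sol A B (mu_f *\<^sub>R mat 1) (mu_g *\<^sub>R mat 1)"
  have Pb: "pos_def Pbar" "Pbar = ric A B (l_f *\<^sub>R mat 1) (l_g *\<^sub>R mat 1) Pbar"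
    using dare_sol_scal[OF assms(7) lf lg] by (simp_all add: Pbar_def)
  have Pu: "pos_def Punder" "Punder = ric A B (mu_f *\<^sub>R mat 1) (mu_g *\<^sub>R mat 1) Punder"
    using dare_sol_scal[OF assms(7) mf mg] by (simp_all add: Punder_def)
  have sPb: "transpose Pbar = Pbar" and sPu: "transpose Punder = Punder"
    using Pb(1) Pu(1) unfolding pd_qf by auto
  have Punn: "0 \<le> qf Punder x" for x using pd_psd[OF Pu(1)] unfolding psd_qf by auto
  \<comment> \<open>properties of Q t, R t\<close>
  have Qt: "transpose (Q t) = Q t" "\<And>x. mu_f * (x \<bullet> x) \<le> qf (Q t) x" "\<And>x. qf (Q t) x \<le> l_f * (x \<bullet> x)"
    if "t < N" for t
  proof -
    have L: "loewner_le (mu_f *\<^sub>R mat 1) (Q t)" "loewner_le (Q t) (l_f *\<^sub>R mat 1)"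
      using assms(8) that unfolding Qset_def by auto
    show "transpose (Q t) = Q t" by (rule sym_from_le[OF L(1) scal_id(1)[OF mf]])
    show "\<And>x. mu_f * (x \<bullet> x) \<le> qf (Q t) x" using L(1) unfolding loewner_qf by (simp add: qf_scal_id)
    show "\<And>x. qf (Q t) x \<le> l_f * (x \<bullet> x)" using L(2) unfolding loewner_qf by (simp add: qf_scal_id)
  qed
  have Rt: "pos_def (R t)" "\<And>x. mu_g * (x \<bullet> x) \<le> qf (R t) x" "\<And>x. qf (R t) x \<le> l_g * (x \<bullet> x)"
    if "t < N" for t
  proof -
    have L: "loewner_le (mu_g *\<^sub>R mat 1) (R t)" "loewner_le (R t) (l_g *\<^sub>R mat 1)"
      using assms(9) that unfolding Qset_def by auto
    have s: "transpose (R t) = R t" by (rule sym_from_le[OF L(1) scal_id(1)[OF mg]])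
    show lo: "\<And>x. mu_g * (x \<bullet> x) \<le> qf (R t) x" using L(1) unfolding loewner_qf by (simp add: qf_scal_id)
    show "\<And>x. qf (R t) x \<le> l_g * (x \<bullet> x)" using L(2) unfolding loewner_qf by (simp add: qf_scal_id)
    have "0 < qf (R t) x" if "x \<noteq> 0" for x
      using lo[of x] that mg by (smt (verit) inner_gt_zero_iff mult_pos_pos)
    then show "pos_def (R t)" using s unfolding pd_qf by auto
  qed
  \<comment> \<open>invariant of the Riccati recursion\<close>
  have inv: "transpose (riccati_aux A B Q R N k) = riccati_aux A B Q R N k \<and>
      (\<forall>x. qf Punder x \<le> qf (riccati_aux A B Q R N k) x \<and> qf (riccati_aux A B Q R N k) x \<le> qf Pbar x)"
    if "k \<le> N" for k
    using that
  proof (induction k)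
    case 0
    have L: "loewner_le Punder (Q N)" "loewner_le (Q N) Pbar"
      using assms(10) unfolding Pset_def Pbar_def Punder_def by auto
    then show ?case using sym_from_le[OF L(1) sPu] unfolding loewner_qf by simp
  next
    case (Suc k)
    define t where "t = N - Suc k"
    have t: "t < N" using Suc.prems by (simp add: t_def)
    define P where "P = riccati_aux A B Q R N k"
    have IH: "transpose P = P" "\<And>x. qf Punder x \<le> qf P x" "\<And>x. qf P x \<le> qf Pbar x"
      using Suc.IH Suc.prems by (auto simp: P_def)
    have psdP: "psd P" unfolding psd_qf using IH(1) IH(2) Punn by (meson order_trans)
    have eq: "riccati_aux A B Q R N (Suc k) = ric A B (Q t) (R t) P" by (simp add: t_def P_def)
    have symn: "transpose (ric A B (Q t) (R t) P) = ric A B (Q t) (R t) P"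
      using Qt(1)[OF t] Rt(1)[OF t] IH(1) S_inv[OF Rt(1)[OF t] psdP] unfolding pd_qf
      by (intro ric_sym) auto
    have lo: "qf Punder x \<le> qf (ric A B (Q t) (R t) P) x" for x
    proof -
      have "qf (ric A B (mu_f *\<^sub>R mat 1) (mu_g *\<^sub>R mat 1) Punder) x \<le> qf (ric A B (Q t) (R t) P) x"
        by (rule ric_mono[OF scal_id(2)[OF mg] pd_psd[OF Pu(1)] Rt(1)[OF t] psdP])
          (use Qt(2)[OF t] Rt(2)[OF t] IH(2) in \<open>simp_all add: qf_scal_id\<close>)
      then show ?thesis using Pu(2) by simp
    qed
    have up: "qf (ric A B (Q t) (R t) P) x \<le> qf Pbar x" for x
    proof -
      have "qf (ric A B (Q t) (R t) P) x \<le> qf (ric A B (l_f *\<^sub>R mat 1) (l_g *\<^sub>R mat 1) Pbar) x"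
        by (rule ric_mono[OF Rt(1)[OF t] psdP scal_id(2)[OF lg] pd_psd[OF Pb(1)]])
          (use Qt(3)[OF t] Rt(3)[OF t] IH(3) in \<open>simp_all add: qf_scal_id\<close>)
      then show ?thesis using Pb(2) by simp
    qed
    show ?case unfolding eq using symn lo up by simp
  qed
  define P where "P t = riccati A B Q R N t" for t
  have Pinv: "transpose (P t) = P t" "\<And>x. qf Punder x \<le> qf (P t) x" "\<And>x. qf (P t) x \<le> qf Pbar x"
    if "t \<le> N" for t
    using inv[of "N - t"] that by (auto simp: P_def riccati_def)
  have Psd: "psd (P t)" if "t \<le> N" for t
    unfolding psd_qf using Pinv[OF that] Punn by (meson order_trans)
  have Prec: "P t = ric A B (Q t) (R t) (P (Suc t))" if "t < N" for t
  proof -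
    have "N - t = Suc (N - Suc t)" using that by simp
    moreover have "N - Suc (N - Suc t) = t" using that by simp
    ultimately show ?thesis by (simp add: P_def riccati_def)
  qed
  define D where "D = closed_loop A B Q R N"
  have Dt: "D t = A - B ** gainm A B (R t) (P (Suc t))" for t
    by (simp add: D_def closed_loop_def gain_def gainm_def P_def Let_def)
  \<comment> \<open>eigenvalue constants\<close>
  define lam where "lam = eig_max Pbar"
  define mu where "mu = eig_min Punder"
  have Pbge: "l_f * (x \<bullet> x) \<le> qf Pbar x" for x
    using ric_ge_Q[OF scal_id(2)[OF lg] pd_psd[OF Pb(1)], where Q="l_f *\<^sub>R mat 1" and A=A and B=B and x=x]
      Pb(2) by (simp add: qf_scal_id)
  have Puge: "mu_f * (x \<bullet> x) \<le> qf Punder x" for x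
    using ric_ge_Q[OF scal_id(2)[OF mg] pd_psd[OF Pu(1)], where Q="mu_f *\<^sub>R mat 1" and A=A and B=B and x=x]
      Pu(2) by (simp add: qf_scal_id)
  have lamge: "l_f \<le> lam" using eig_lower(2)[OF sPb Pbge] by (simp add: lam_def)
  have muge: "mu_f \<le> mu" using eig_lower(1)[OF sPu Puge] by (simp add: mu_def)
  have lamb: "qf Pbar x \<le> lam * (x \<bullet> x)" for x using eig_bounds(1)[OF sPb] by (simp add: lam_def)
  have mub: "mu * (x \<bullet> x) \<le> qf Punder x" for x using eig_bounds(2)[OF sPu] by (simp add: mu_def)
  have lampos: "0 < lam" using lamge lf by simp
  have mupos: "0 < mu" using muge mf by simp
  define c where "c = 1 - mu_f / lam"
  have c01: "0 \<le> c" "c < 1" using lamge assms(5) mf lampos by (simp_all add: c_def field_simps)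
  \<comment> \<open>one-step decay\<close>
  have dec: "qf (P (Suc t)) (D t *v x) \<le> c * qf (P t) x" if "t < N" for t x
  proof -
    have e: "qf (P t) x = qf (Q t) x + qf (R t) (gainm A B (R t) (P (Suc t)) *v x) + qf (P (Suc t)) (D t *v x)"
      using ric_eq[OF Rt(1)[OF that] Psd[of "Suc t"], of A B "Q t" x] that Prec[OF that]
      by (simp add: Dt)
    have "0 \<le> qf (R t) (gainm A B (R t) (P (Suc t)) *v x)"
      using Rt(1)[OF that] unfolding pd_qf
      by (cases "gainm A B (R t) (P (Suc t)) *v x = 0") (auto intro: less_imp_le)
    then have a: "qf (P (Suc t)) (D t *v x) \<le> qf (P t) x - mu_f * (x \<bullet> x)"
      using e Qt(2)[OF that, of x] by simp
    have "mu_f / lam * qf (P t) x \<le> mu_f / lam * (lam * (x \<bullet> x))"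
      using lamb[of x] Pinv(3)[of t x] that mf lampos
      by (intro mult_left_mono) (auto intro: order_trans)
    also have "\<dots> = mu_f * (x \<bullet> x)" using lampos by simp
    finally show ?thesis using a by (simp add: c_def algebra_simps)
  qed
  have multi: "qf (P (t0 + k)) (trans_prod D t0 k *v x) \<le> c^k * qf (P t0) x"
    if "t0 + k \<le> N" for t0 k x
    using that
  proof (induction k)
    case 0 then show ?case by simp
  next
    case (Suc k)
    have "qf (P (t0 + Suc k)) (trans_prod D t0 (Suc k) *v x)
        = qf (P (Suc (t0 + k))) (D (t0 + k) *v (trans_prod D t0 k *v x))"
      by (simp add: mv_assoc)
    also have "\<dots> \<le> c * qf (P (t0 + k)) (trans_prod D t0 k *v x)"
      using dec[of "t0 + k"] Suc.prems by simp
    also have "\<dots> \<le> c * (c^k * qf (P t0) x)"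
      using Suc c01 by (intro mult_left_mono) auto
    finally show ?case by simp
  qed
  have bound: "mnorm (Phi D t t0) \<le> sqrt (lam / mu) * sqrt c ^ (t - t0)"
    if "t0 \<le> t" "t \<le> N" for t0 t
  proof -
    define k where "k = t - t0"
    have tk: "t0 + k = t" using that by (simp add: k_def)
    have nb: "norm (trans_prod D t0 k *v x) \<le> sqrt (lam / mu) * sqrt c ^ k * norm x" for x
    proof -
      define y where "y = trans_prod D t0 k *v x"
      have "mu * (y \<bullet> y) \<le> qf (P t) y" using mub[of y] Pinv(2)[OF that(2), of y] by simp
      also have "\<dots> \<le> c^k * qf (P t0) x" using multi[of t0 k x] tk that by (simp add: y_def)
      also have "\<dots> \<le> c^k * (lam * (x \<bullet> x))"
        using Pinv(3)[of t0 x] that lamb[of x] c01 by (intro mult_left_mono) auto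
      finally have "mu * (norm y)^2 \<le> c^k * lam * (norm x)^2" by (simp add: dot_square_norm mult_ac)
      then have "(norm y)^2 \<le> (lam / mu) * c^k * (norm x)^2" using mupos by (simp add: field_simps)
      then have "norm y \<le> sqrt ((lam / mu) * c^k * (norm x)^2)" by (rule real_le_rsqrt)
      also have "\<dots> = sqrt (lam / mu) * sqrt c ^ k * norm x"
        by (simp only: real_sqrt_mult real_sqrt_power real_sqrt_abs norm_ge_zero abs_norm_cancel
            flip: real_sqrt_power)
      finally show ?thesis by (simp add: y_def)
    qed
    have "onorm (\<lambda>x. trans_prod D t0 k *v x) \<le> sqrt (lam / mu) * sqrt c ^ k"
      by (rule onorm_le) (rule nb)
    then show ?thesis by (simp add: mnorm_def Phi_def k_def)
  qed
  show ?thesis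
    unfolding Let_def Pbar_def[symmetric] Punder_def[symmetric] lam_def[symmetric] mu_def[symmetric]
      c_def[symmetric] D_def[symmetric]
    using c01 bound by simp
qed


end
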